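(* Let $S$ be a dense subsemigroup of $((0,\infty),+)$ and let $\mathcal{K}=\{A\subseteq S: S\setminus A\text{ is not a } J\text{-set near zero}\}$. Then $\mathcal{K}$ is a filter on $S$, $J_0(S)=\overline{\mathcal{K}}$, and $J_0(S)$ is a compact subsemigroup of $\beta S$.
   Context: "Dense" means dense in the usual topology of $(0,\infty)$. $\beta S$ is the Stone–Čech compactification of the discrete set $S$ (ultrafilters on $S$), with $+$ extended so that $(\beta S,+)$ is a compact right topological semigroup: $A\in p+q$ iff $\{x\in S:-x+A\in q\}\in p$. $O^{+}(S)=\{p\in\beta S: S\cap(0,\epsilon)\in p\text{ for every }\epsilon>0\}$. For a filter $\mathcal{K}$ on $S$, $\overline{\mathcal{K}}=\{p\in\beta S:\mathcal{K}\subseteq p\}$. Let $\tau_0$ be the set of sequences $f:\mathbb{N}\to S$ with $f(n)\to0$. A set $A\subseteq S$ is a $J$-set near zero iff for every finite nonempty $F\subseteq\tau_0$ and every $\delta>0$ there exist $a\in S\cap(0,\delta)$ and a finite nonempty $H\subseteq\mathbb{N}$ such that $a+\sum_{t\in H}f(t)\in A$ for every $f\in F$. $J_0(S)=\{p\in O^{+}(S): \text{every } A\in p \text{ is a } J\text{-set near zero}\}$. *)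

theory Defs
  imports "HOL-Analysis.Analysis"
begin

definition dense_subsemigroup :: "real set \<Rightarrow> bool" where
  "dense_subsemigroup S \<longleftrightarrow>
     S \<subseteq> {0<..} \<and> (\<forall>x\<in>S. \<forall>y\<in>S. x + y \<in> S) \<and>
     (\<forall>x y. 0 < x \<and> x < y \<longrightarrow> (\<exists>s\<in>S. x < s \<and> s < y))"

definition filter_on :: "'a set \<Rightarrow> 'a set set \<Rightarrow> bool" where
  "filter_on S K \<longleftrightarrow>
     K \<subseteq> Pow S \<and> S \<in> K \<and> {} \<notin> K \<and>
     (\<forall>A\<in>K. \<forall>B\<in>K. A \<inter> B \<in> K) \<and>
     (\<forall>A\<in>K. \<forall>B. A \<subseteq> B \<and> B \<subseteq> S \<longrightarrow> B \<in> K)"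

definition ultrafilter_on :: "'a set \<Rightarrow> 'a set set \<Rightarrow> bool" where
  "ultrafilter_on S p \<longleftrightarrow> filter_on S p \<and> (\<forall>A. A \<subseteq> S \<longrightarrow> A \<in> p \<or> S - A \<in> p)"

definition beta :: "'a set \<Rightarrow> 'a set set set" where
  "beta S = {p. ultrafilter_on S p}"

definition beta_topology :: "'a set \<Rightarrow> 'a set set topology" where
  "beta_topology S = topology_generated_by {{p \<in> beta S. A \<in> p} | A. A \<subseteq> S}"

text \<open>Extended addition: A \<in> p + q iff {x \<in> S. -x + A \<in> q} \<in> p,
  where -x + A = {y \<in> S. x + y \<in> A}.\<close>
definition beta_plus :: "'a::plus set \<Rightarrow> 'a set set \<Rightarrow> 'a set set \<Rightarrow> 'a set set" where
  "beta_plus S p q = {A. A \<subseteq> S \<and> {x \<in> S. {y \<in> S. x + y \<in> A} \<in> q} \<in> p}"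

definition Oplus :: "real set \<Rightarrow> real set set set" where
  "Oplus S = {p \<in> beta S. \<forall>\<epsilon>>0. S \<inter> {0<..<\<epsilon>} \<in> p}"

definition tau0 :: "real set \<Rightarrow> (nat \<Rightarrow> real) set" where
  "tau0 S = {f. (\<forall>n. f n \<in> S) \<and> f \<longlonglongrightarrow> 0}"

definition J_set_near_zero :: "real set \<Rightarrow> real set \<Rightarrow> bool" where
  "J_set_near_zero S A \<longleftrightarrow>
     (\<forall>F. finite F \<and> F \<noteq> {} \<and> F \<subseteq> tau0 S \<longrightarrow>
       (\<forall>\<delta>>0. \<exists>a\<in>S \<inter> {0<..<\<delta>}. \<exists>H::nat set. finite H \<and> H \<noteq> {} \<and>
          (\<forall>f\<in>F. a + (\<Sum>t\<in>H. f t) \<in> A)))"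

definition J0 :: "real set \<Rightarrow> real set set set" where
  "J0 S = {p \<in> Oplus S. \<forall>A\<in>p. J_set_near_zero S A}"

definition filter_closure :: "'a set \<Rightarrow> 'a set set \<Rightarrow> 'a set set set" where
  "filter_closure S K = {p \<in> beta S. K \<subseteq> p}"

end

theory Submission
  imports Defs
begin


definition words :: "nat \<Rightarrow> nat \<Rightarrow> (nat \<Rightarrow> nat) set" where
  "words k N = PiE {..<N} (\<lambda>_. {..<k})"
definition line :: "(nat \<Rightarrow> nat) \<Rightarrow> nat set \<Rightarrow> nat \<Rightarrow> nat \<Rightarrow> nat" where
  "line w V x = (\<lambda>i. if i \<in> V then x else w i)"
definition cat :: "nat \<Rightarrow> nat \<Rightarrow> (nat\<Rightarrow>nat) \<Rightarrow> (nat\<Rightarrow>nat) \<Rightarrow> nat \<Rightarrow> nat" where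
  "cat n m u v = (\<lambda>i. if i < n then u i else if i < n + m then v (i - n) else undefined)"
definition hjmono :: "nat \<Rightarrow> ((nat \<Rightarrow> nat) \<Rightarrow> nat) \<Rightarrow> nat \<Rightarrow> bool" where
  "hjmono k c N \<longleftrightarrow> (\<exists>w V. w \<in> words k N \<and> V \<noteq> {} \<and> V \<subseteq> {..<N} \<and>
      (\<forall>x<k. c (line w V x) = c (line w V 0)))"
definition focused :: "nat \<Rightarrow> ((nat \<Rightarrow> nat) \<Rightarrow> nat) \<Rightarrow> nat \<Rightarrow> nat \<Rightarrow> bool" where
  "focused k c n s \<longleftrightarrow> (\<exists>f W V. f \<in> words (Suc k) n \<and>
     (\<forall>j<s. W j \<in> words (Suc k) n \<and> V j \<noteq> {} \<and> V j \<subseteq> {..<n} \<and>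
        (\<forall>x<k. c (line (W j) (V j) x) = c (line (W j) (V j) 0)) \<and> line (W j) (V j) k = f) \<and>
     inj_on (\<lambda>j. c (line (W j) (V j) 0)) {..<s})"

lemma line_words: "w \<in> words k N \<Longrightarrow> V \<subseteq> {..<N} \<Longrightarrow> x < k \<Longrightarrow> line w V x \<in> words k N"
  unfolding words_def line_def PiE_def Pi_def extensional_def by auto

lemma words_mono: "k \<le> k' \<Longrightarrow> words k N \<subseteq> words k' N"
  unfolding words_def by (intro PiE_mono) auto

lemma finite_words: "finite (words k N)"
  unfolding words_def by (intro finite_PiE) auto

lemma cat_words: "u \<in> words k n \<Longrightarrow> v \<in> words k m \<Longrightarrow> cat n m u v \<in> words k (n+m)"
  unfolding words_def cat_def PiE_def Pi_def extensional_def by auto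

lemma line_cat: "A \<subseteq> {..<n} \<Longrightarrow> B \<subseteq> {..<m} \<Longrightarrow>
   line (cat n m u v) (A \<union> (+) n ` B) x = cat n m (line u A x) (line v B x)"
  unfolding line_def cat_def by (rule ext) force

lemma line_empty[simp]: "line u {} x = u"
  unfolding line_def by simp

lemma focusing:
  assumes k: "0 < k"
  and IHk: "\<And>R. \<exists>N. \<forall>c. (\<forall>u\<in>words k N. c u < R) \<longrightarrow> hjmono k c N"
  shows "\<exists>n. \<forall>ch. (\<forall>u\<in>words (Suc k) n. ch u < r) \<longrightarrow> hjmono (Suc k) ch n \<or> focused k ch n s"
proof (induction s)
  case 0
  show ?case
    by (rule exI[of _ 0]) (auto simp: focused_def words_def)
next
  case (Suc s)
  then obtain n where n: "\<And>ch. (\<forall>u\<in>words (Suc k) n. ch u < r) \<Longrightarrow> hjmono (Suc k) ch n \<or> focused k ch n s"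
    by blast
  define Fs where "Fs = PiE (words (Suc k) n) (\<lambda>_. {..<r})"
  have "finite Fs" unfolding Fs_def by (intro finite_PiE finite_words) auto
  then obtain enc where enc: "bij_betw enc Fs {0..<card Fs}"
    using ex_bij_betw_finite_nat by blast
  obtain m where m: "\<And>c. (\<forall>u\<in>words k m. c u < card Fs) \<Longrightarrow> hjmono k c m"
    using IHk by blast
  show ?case
  proof (rule exI[of _ "n+m"], intro allI impI)
    fix ch assume col: "\<forall>u\<in>words (Suc k) (n+m). ch u < r"
    define \<Phi> where "\<Phi> v = restrict (\<lambda>u. ch (cat n m u v)) (words (Suc k) n)" for v
    have \<Phi>F: "\<Phi> v \<in> Fs" if "v \<in> words (Suc k) m" for v
      unfolding \<Phi>_def Fs_def using col cat_words[OF _ that] by auto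
    have wk: "words k m \<subseteq> words (Suc k) m" by (rule words_mono) simp
    have "\<forall>u\<in>words k m. enc (\<Phi> u) < card Fs"
    proof
      fix u assume "u \<in> words k m"
      then have "\<Phi> u \<in> Fs" using \<Phi>F wk by blast
      then show "enc (\<Phi> u) < card Fs" using bij_betw_apply[OF enc] by fastforce
    qed
    from m[OF this] have "hjmono k (\<lambda>v. enc (\<Phi> v)) m" .
    then obtain w' V' where w': "w' \<in> words k m" "V' \<noteq> {}" "V' \<subseteq> {..<m}"
      and mono': "\<And>x. x<k \<Longrightarrow> enc (\<Phi> (line w' V' x)) = enc (\<Phi> (line w' V' 0))"
      unfolding hjmono_def by blast
    define v where "v x = line w' V' x" for x
    have vk: "x < k \<Longrightarrow> v x \<in> words k m" for x unfolding v_def using line_words[OF w'(1,3)] by simp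
    have vSk: "x \<le> k \<Longrightarrow> v x \<in> words (Suc k) m" for x
    proof -
      assume "x \<le> k"
      moreover have "w' \<in> words (Suc k) m" using w'(1) wk by blast
      ultimately show ?thesis using line_words[OF _ w'(3), of w' "Suc k" x] unfolding v_def by simp
    qed
    have eq\<Phi>: "\<Phi> (v x) = \<Phi> (v 0)" if "x < k" for x
    proof -
      have 1: "\<Phi> (v x) \<in> Fs" using \<Phi>F vSk that by simp
      have 2: "\<Phi> (v 0) \<in> Fs" using \<Phi>F vSk by simp
      have 3: "enc (\<Phi> (v x)) = enc (\<Phi> (v 0))" using mono'[OF that] unfolding v_def .
      show ?thesis by (rule inj_onD[OF bij_betw_imp_inj_on[OF enc] 3 1 2])
    qed
    have eqch: "ch (cat n m u (v x)) = ch (cat n m u (v 0))" if "x < k" "u \<in> words (Suc k) n" for x u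
      using fun_cong[OF eq\<Phi>[OF that(1)], of u] that(2) unfolding \<Phi>_def by simp
    define dd where "dd u = ch (cat n m u (v 0))" for u
    have "\<forall>u\<in>words (Suc k) n. dd u < r"
    proof
      fix u assume "u \<in> words (Suc k) n"
      from cat_words[OF this vSk[of 0]] col show "dd u < r" unfolding dd_def by simp
    qed
    from n[OF this] show "hjmono (Suc k) ch (n+m) \<or> focused k ch (n+m) (Suc s)"
    proof
      assume "hjmono (Suc k) dd n"
      then obtain w V where wV: "w \<in> words (Suc k) n" "V \<noteq> {}" "V \<subseteq> {..<n}"
        and mo: "\<forall>x<Suc k. dd (line w V x) = dd (line w V 0)"
        unfolding hjmono_def by blast
      have lc: "line (cat n m w (v 0)) V x = cat n m (line w V x) (v 0)" for x
        using line_cat[OF wV(3), of "{}" m w "v 0" x] by simp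
      have "hjmono (Suc k) ch (n+m)"
        unfolding hjmono_def
      proof (intro exI[of _ "cat n m w (v 0)"] exI[of _ V] conjI allI impI)
        show "cat n m w (v 0) \<in> words (Suc k) (n + m)" using cat_words[OF wV(1) vSk[of 0]] by simp
        show "V \<subseteq> {..<n + m}" using wV(3) by auto
        show "V \<noteq> {}" by fact
        fix x assume "x < Suc k"
        then show "ch (line (cat n m w (v 0)) V x) = ch (line (cat n m w (v 0)) V 0)"
          using mo \<open>x < Suc k\<close> unfolding lc dd_def by blast
      qed
      then show ?thesis ..
    next
      assume "focused k dd n s"
      then obtain f W V where f: "f \<in> words (Suc k) n"
        and WV: "\<And>j. j<s \<Longrightarrow> W j \<in> words (Suc k) n \<and> V j \<noteq> {} \<and> V j \<subseteq> {..<n} \<and>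
          (\<forall>x<k. dd (line (W j) (V j) x) = dd (line (W j) (V j) 0)) \<and> line (W j) (V j) k = f"
        and inj: "inj_on (\<lambda>j. dd (line (W j) (V j) 0)) {..<s}"
        unfolding focused_def by blast
      have WV1: "\<And>j. j<s \<Longrightarrow> W j \<in> words (Suc k) n" using WV by blast
      have WV3: "\<And>j. j<s \<Longrightarrow> V j \<subseteq> {..<n}" using WV by blast
      have WV4: "\<And>j x. j<s \<Longrightarrow> x < k \<Longrightarrow> dd (line (W j) (V j) x) = dd (line (W j) (V j) 0)" using WV by blast
      have WV5: "\<And>j. j<s \<Longrightarrow> line (W j) (V j) k = f" using WV by blast
      show ?thesis
      proof (cases "\<exists>j<s. dd (line (W j) (V j) 0) = dd f")
        case True
        then obtain j where j: "j < s" "dd (line (W j) (V j) 0) = dd f" by blast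
        have "hjmono (Suc k) dd n"
          unfolding hjmono_def
        proof (intro exI[of _ "W j"] exI[of _ "V j"] conjI allI impI)
          fix x assume "x < Suc k"
          then consider "x < k" | "x = k" by linarith
          then show "dd (line (W j) (V j) x) = dd (line (W j) (V j) 0)"
            using WV[OF j(1)] j(2) by cases (blast, metis)
        qed (use WV[OF j(1)] in blast)+
        then obtain w V where wV: "w \<in> words (Suc k) n" "V \<noteq> {}" "V \<subseteq> {..<n}"
          and mo: "\<forall>x<Suc k. dd (line w V x) = dd (line w V 0)"
          unfolding hjmono_def by blast
        have lc: "line (cat n m w (v 0)) V x = cat n m (line w V x) (v 0)" for x
          using line_cat[OF wV(3), of "{}" m w "v 0" x] by simp
        have "hjmono (Suc k) ch (n+m)"
          unfolding hjmono_def
        proof (intro exI[of _ "cat n m w (v 0)"] exI[of _ V] conjI allI impI)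
          show "cat n m w (v 0) \<in> words (Suc k) (n + m)" using cat_words[OF wV(1) vSk[of 0]] by simp
          show "V \<subseteq> {..<n + m}" using wV(3) by auto
          show "V \<noteq> {}" by fact
          fix x assume "x < Suc k"
          then show "ch (line (cat n m w (v 0)) V x) = ch (line (cat n m w (v 0)) V 0)"
            using mo \<open>x < Suc k\<close> unfolding lc dd_def by blast
        qed
        then show ?thesis ..
      next
        case False
        define W' where "W' j = (if j < s then cat n m (W j) w' else cat n m f w')" for j
        define V'' where "V'' j = (if j < s then V j \<union> (+) n ` V' else (+) n ` V')" for j
        have lineW: "line (W' j) (V'' j) x = cat n m (if j < s then line (W j) (V j) x else f) (v x)"
          if "j < Suc s" for j x
        proof (cases "j < s")
          case True
          then show ?thesis using line_cat[of "V j" n V' m "W j" w' x] WV3[OF True] w'(3)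
            unfolding W'_def V''_def v_def by simp
        next
          case False
          then show ?thesis using line_cat[of "{}" n V' m f w' x] w'(3)
            unfolding W'_def V''_def v_def by simp
        qed
        have wSk: "w' \<in> words (Suc k) m" using w'(1) wk by blast
        have "focused k ch (n+m) (Suc s)"
          unfolding focused_def
        proof (intro exI[of _ "cat n m f (v k)"] exI[of _ W'] exI[of _ V''] conjI allI impI)
          show "cat n m f (v k) \<in> words (Suc k) (n + m)" using cat_words[OF f vSk[of k]] by simp
        next
          fix j assume j: "j < Suc s"
          show "W' j \<in> words (Suc k) (n + m)"
            unfolding W'_def using cat_words[OF _ wSk] WV1 f by auto
          show "V'' j \<noteq> {}" unfolding V''_def using w'(2) by auto
          show "V'' j \<subseteq> {..<n + m}"
          proof (cases "j < s")
            case True then show ?thesis using WV3[OF True] w'(3) unfolding V''_def by auto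
          next
            case False then show ?thesis using w'(3) unfolding V''_def by auto
          qed
          show "line (W' j) (V'' j) k = cat n m f (v k)"
            unfolding lineW[OF j] using WV5 by auto
          {
            fix x assume x: "x < k"
            have lw: "(if j < s then line (W j) (V j) x else f) \<in> words (Suc k) n"
              using line_words[of "W j" "Suc k" n "V j" x] WV1 WV3 f x by auto
            have "ch (line (W' j) (V'' j) x) = dd (if j < s then line (W j) (V j) x else f)"
              unfolding lineW[OF j] dd_def using eqch[OF x lw] .
            also have "\<dots> = dd (if j < s then line (W j) (V j) 0 else f)"
              using WV4[of j x] x by (cases "j < s") simp_all
            also have "\<dots> = ch (line (W' j) (V'' j) 0)"
              unfolding lineW[OF j] dd_def by simp
            finally show "ch (line (W' j) (V'' j) x) = ch (line (W' j) (V'' j) 0)" .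
          }
        next
          have c: "ch (line (W' j) (V'' j) 0) = dd (if j < s then line (W j) (V j) 0 else f)"
            if "j < Suc s" for j
            unfolding lineW[OF that] dd_def by simp
          show "inj_on (\<lambda>j. ch (line (W' j) (V'' j) 0)) {..<Suc s}"
            unfolding inj_on_def
          proof (intro ballI impI)
            fix i j assume i: "i \<in> {..<Suc s}" and j: "j \<in> {..<Suc s}"
              and e: "ch (line (W' i) (V'' i) 0) = ch (line (W' j) (V'' j) 0)"
            from e c[of i] c[of j] i j have e': "dd (if i < s then line (W i) (V i) 0 else f)
               = dd (if j < s then line (W j) (V j) 0 else f)" by auto
            show "i = j"
            proof (cases "i < s"; cases "j < s")
              assume "i < s" "j < s" then show ?thesis using e' inj unfolding inj_on_def by auto
            next
              assume "i < s" "\<not> j < s" then show ?thesis using e' False by auto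
            next
              assume "\<not> i < s" "j < s" then show ?thesis using e' False by auto
            next
              assume "\<not> i < s" "\<not> j < s" then show ?thesis using i j by auto
            qed
          qed
        qed
        then show ?thesis ..
      qed
    qed
  qed
qed

lemma HJ_step:
  assumes k: "0 < k"
  and IHk: "\<And>R. \<exists>N. \<forall>c. (\<forall>u\<in>words k N. c u < R) \<longrightarrow> hjmono k c N"
  shows "\<exists>N. \<forall>c. (\<forall>u\<in>words (Suc k) N. c u < r) \<longrightarrow> hjmono (Suc k) c N"
proof -
  obtain n where n: "\<And>ch. (\<forall>u\<in>words (Suc k) n. ch u < r) \<Longrightarrow> hjmono (Suc k) ch n \<or> focused k ch n (Suc r)"
    using focusing[OF k IHk, of r "Suc r"] by blast
  show ?thesis
  proof (rule exI[of _ n], intro allI impI)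
    fix c assume col: "\<forall>u\<in>words (Suc k) n. c u < r"
    have "\<not> focused k c n (Suc r)"
    proof
      assume "focused k c n (Suc r)"
      then obtain W V where WV: "\<And>j. j<Suc r \<Longrightarrow> W j \<in> words (Suc k) n \<and> V j \<subseteq> {..<n}"
        and inj: "inj_on (\<lambda>j. c (line (W j) (V j) 0)) {..<Suc r}"
        unfolding focused_def by blast
      have "(\<lambda>j. c (line (W j) (V j) 0)) ` {..<Suc r} \<subseteq> {..<r}"
        using col line_words WV by blast
      from card_inj_on_le[OF inj this] show False by simp
    qed
    then show "hjmono (Suc k) c n" using n[OF col] by blast
  qed
qed

theorem HJ: "0 < k \<Longrightarrow> \<exists>N. \<forall>c. (\<forall>u\<in>words k N. c u < r) \<longrightarrow> hjmono k c N"
proof (induction k arbitrary: r)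
  case 0 then show ?case by simp
next
  case (Suc k)
  show ?case
  proof (cases "k = 0")
    case True
    have "hjmono 1 c 1" for c
      unfolding hjmono_def words_def
      by (rule exI[of _ "\<lambda>i. if i < 1 then 0 else undefined"], rule exI[of _ "{0}"]) (auto simp: PiE_def extensional_def split: if_splits)
    with True show ?thesis by auto
  next
    case False
    then show ?thesis using HJ_step Suc.IH by blast
  qed
qed




lemma ds_pos: "dense_subsemigroup S \<Longrightarrow> x \<in> S \<Longrightarrow> 0 < x"
  unfolding dense_subsemigroup_def by auto
lemma ds_add: "dense_subsemigroup S \<Longrightarrow> x \<in> S \<Longrightarrow> y \<in> S \<Longrightarrow> x + y \<in> S"
  unfolding dense_subsemigroup_def by auto
lemma ds_between: "dense_subsemigroup S \<Longrightarrow> 0 < x \<Longrightarrow> x < y \<Longrightarrow> \<exists>s\<in>S. x < s \<and> s < y"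
  unfolding dense_subsemigroup_def by auto

lemma ds_add_sum:
  assumes ds: "dense_subsemigroup S" and "finite I" "a \<in> S" "\<forall>i\<in>I. b i \<in> S"
  shows "a + sum b I \<in> S"
  using assms(2-4)
proof (induction I rule: finite_induct)
  case empty then show ?case by simp
next
  case (insert x F)
  have eq: "a + sum b (insert x F) = (a + sum b F) + b x"
    using insert.hyps by (simp add: algebra_simps)
  show ?case unfolding eq by (rule ds_add[OF ds]) (use insert in auto)
qed

lemma ds_sum:
  assumes ds: "dense_subsemigroup S" and "finite I" "I \<noteq> {}" "\<forall>i\<in>I. b i \<in> S"
  shows "sum b I \<in> S"
proof -
  obtain i where i: "i \<in> I" using assms by blast
  have "sum b I = b i + sum b (I - {i})"
    using assms(2) i by (simp add: sum.remove)
  then show ?thesis using ds_add_sum[OF ds _ _, of "I - {i}" "b i" b] assms i by simp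
qed

lemma geo_sum_le: "finite H \<Longrightarrow> (\<Sum>t\<in>H. (1/2::real)^t) \<le> 2"
proof -
  assume "finite H"
  have s: "summable (\<lambda>t. (1/2::real)^t)" by (rule summable_geometric) simp
  have "(\<Sum>t\<in>H. (1/2::real)^t) \<le> suminf (\<lambda>t. (1/2::real)^t)"
    by (rule sum_le_suminf[OF s \<open>finite H\<close>]) simp
  also have "\<dots> = 2" using suminf_geometric[of "1/2::real"] by simp
  finally show ?thesis .
qed

lemma small_seq:
  assumes ds: "dense_subsemigroup S" and e: "0 < e"
  shows "\<exists>f. (\<forall>n. f n \<in> S \<and> 0 < f n \<and> f n < e * (1/2)^n) \<and> f \<in> tau0 S"
proof -
  have "\<forall>n. \<exists>s\<in>S. e * (1/2)^n / 2 < s \<and> s < e * (1/2)^n"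
  proof
    fix n :: nat
    have "0 < e * (1/2::real)^n" using e by simp
    then show "\<exists>s\<in>S. e * (1/2)^n / 2 < s \<and> s < e * (1/2)^n"
      using ds_between[OF ds, of "e*(1/2)^n/2" "e*(1/2)^n"] by simp
  qed
  then obtain f where f: "\<And>n. f n \<in> S \<and> e * (1/2)^n / 2 < f n \<and> f n < e * (1/2)^n"
    by metis
  have pos: "0 < f n" for n using f[of n] ds_pos[OF ds] by blast
  have lim: "(\<lambda>n. e * (1/2::real)^n) \<longlonglongrightarrow> 0"
    using tendsto_mult_right_zero[OF LIMSEQ_power_zero[of "1/2::real"]] by simp
  have "f \<longlonglongrightarrow> 0"
    by (rule tendsto_sandwich[OF _ _ tendsto_const lim])
       (use pos f in \<open>auto intro: always_eventually less_imp_le\<close>)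
  then show ?thesis using f pos unfolding tau0_def by blast
qed

lemma tau0_ne: "dense_subsemigroup S \<Longrightarrow> \<exists>f. f \<in> tau0 S"
  using small_seq[of S 1] by auto

lemma J_S: assumes ds: "dense_subsemigroup S" shows "J_set_near_zero S S"
  unfolding J_set_near_zero_def
proof (intro allI impI)
  fix F :: "(nat \<Rightarrow> real) set" and \<delta> :: real
  assume F: "finite F \<and> F \<noteq> {} \<and> F \<subseteq> tau0 S" and d: "0 < \<delta>"
  obtain a where a: "a \<in> S" "\<delta>/2 < a" "a < \<delta>" using ds_between[OF ds, of "\<delta>/2" \<delta>] d by auto
  show "\<exists>a\<in>S \<inter> {0<..<\<delta>}. \<exists>H. finite H \<and> H \<noteq> {} \<and> (\<forall>f\<in>F. a + sum f H \<in> S)"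
  proof (intro bexI exI conjI ballI)
    fix f assume "f \<in> F"
    then have "f 0 \<in> S" using F unfolding tau0_def by blast
    then show "a + sum f {0} \<in> S" using ds_add[OF ds a(1)] by simp
  qed (use a d in auto)
qed

lemma not_J_empty: assumes ds: "dense_subsemigroup S" shows "\<not> J_set_near_zero S {}"
proof
  assume J: "J_set_near_zero S {}"
  obtain f where "f \<in> tau0 S" using tau0_ne[OF ds] by blast
  then show False using J[unfolded J_set_near_zero_def, rule_format, of "{f}" 1] by auto
qed

lemma J_mono: "J_set_near_zero S A \<Longrightarrow> A \<subseteq> B \<Longrightarrow> J_set_near_zero S B"
  unfolding J_set_near_zero_def by (meson subsetD)

lemma not_J_tail:
  assumes ds: "dense_subsemigroup S" and e: "0 < \<epsilon>"
  shows "\<not> J_set_near_zero S (S - S \<inter> {0<..<\<epsilon>})"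
proof
  assume J: "J_set_near_zero S (S - S \<inter> {0<..<\<epsilon>})"
  obtain f where f: "\<And>n. f n \<in> S \<and> 0 < f n \<and> f n < \<epsilon>/4 * (1/2)^n" and ft: "f \<in> tau0 S"
    using small_seq[OF ds, of "\<epsilon>/4"] e by auto
  have "\<exists>a\<in>S \<inter> {0<..<\<epsilon>/2}. \<exists>H. finite H \<and> H \<noteq> {} \<and> (\<forall>g\<in>{f}. a + sum g H \<in> S - S \<inter> {0<..<\<epsilon>})"
    by (rule J[unfolded J_set_near_zero_def, rule_format]) (use ft e in auto)
  then obtain a H where a0: "a \<in> S \<inter> {0<..<\<epsilon>/2}" and H: "finite H"
    and in1: "a + sum f H \<in> S - S \<inter> {0<..<\<epsilon>}"
    by blast
  from a0 have a: "a \<in> S" "0 < a" "a < \<epsilon>/2" by auto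
  have "sum f H \<le> (\<Sum>t\<in>H. \<epsilon>/4 * (1/2)^t)"
    by (rule sum_mono) (use f in \<open>simp add: less_imp_le\<close>)
  also have "\<dots> = \<epsilon>/4 * (\<Sum>t\<in>H. (1/2)^t)" by (simp add: sum_distrib_left)
  also have "\<dots> \<le> \<epsilon>/4 * 2" using geo_sum_le[OF H] e by (intro mult_left_mono) auto
  finally have "a + sum f H < \<epsilon>" using a by simp
  moreover have "0 \<le> sum f H" using f by (simp add: sum_nonneg less_imp_le)
  then have "0 < a + sum f H" using a by simp
  moreover have "\<not> (0 < a + sum f H \<and> a + sum f H < \<epsilon>)" using in1 by auto
  ultimately show False by blast
qed




lemma words_lt: "w \<in> words k N \<Longrightarrow> i < N \<Longrightarrow> w i < k"
  unfolding words_def by (auto simp: PiE_def Pi_def)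

lemma words_ne: "0 < k \<Longrightarrow> (\<lambda>i. if i < N then 0 else undefined) \<in> words k N"
  unfolding words_def by (auto simp: PiE_def Pi_def extensional_def)

lemma pattern:
  assumes ds: "dense_subsemigroup S" and J: "J_set_near_zero S (C \<union> D)"
  and F: "finite F" "F \<noteq> {}" "F \<subseteq> tau0 S" and d: "0 < \<delta>"
  shows "\<exists>a\<in>S \<inter> {0<..<\<delta>}. \<exists>H. finite H \<and> H \<noteq> {} \<and>
     ((\<forall>f\<in>F. a + sum f H \<in> C) \<or> (\<forall>f\<in>F. a + sum f H \<in> D))"
proof -
  define k where "k = card F"
  have k: "0 < k" unfolding k_def using F by (simp add: card_gt_0_iff)
  obtain e where e: "bij_betw e {0..<k} F" unfolding k_def using ex_bij_betw_nat_finite[OF F(1)] by blast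
  have eF: "x < k \<Longrightarrow> e x \<in> F" for x using bij_betw_apply[OF e] by auto
  have Fe: "f \<in> F \<Longrightarrow> \<exists>x<k. f = e x" for f using e unfolding bij_betw_def by auto
  obtain N where N: "\<And>c. (\<forall>u\<in>words k N. c u < 2) \<Longrightarrow> hjmono k c N" using HJ[OF k, of 2] by blast
  have N0: "0 < N"
  proof -
    have "hjmono k (\<lambda>_. 0) N" by (rule N) simp
    then obtain V where "V \<noteq> {}" "V \<subseteq> {..<N}" unfolding hjmono_def by blast
    then show ?thesis by (metis bot.extremum_uniqueI lessThan_0 not_gr0)
  qed
  have FS: "f \<in> F \<Longrightarrow> f n \<in> S" for f n using F(3) unfolding tau0_def by blast
  have Flim: "f \<in> F \<Longrightarrow> f \<longlonglongrightarrow> 0" for f using F(3) unfolding tau0_def by blast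
  define \<epsilon> where "\<epsilon> t = \<delta> / (4 * N) * (1/2)^t" for t :: nat
  have \<epsilon>pos: "0 < \<epsilon> t" for t unfolding \<epsilon>_def using d N0 by simp
  have "\<forall>t. \<exists>M. \<forall>n\<ge>M. \<forall>f\<in>F. f n < \<epsilon> t"
  proof
    fix t
    have "eventually (\<lambda>n. \<forall>f\<in>F. f n < \<epsilon> t) sequentially"
      by (rule eventually_ball_finite[OF F(1)]) (use order_tendstoD(2)[OF Flim \<epsilon>pos] in blast)
    then show "\<exists>M. \<forall>n\<ge>M. \<forall>f\<in>F. f n < \<epsilon> t" by (simp add: eventually_sequentially)
  qed
  from choice[OF this] obtain Th where Th0: "\<forall>t. \<forall>n\<ge>Th t. \<forall>f\<in>F. f n < \<epsilon> t" by blast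
  have Th: "n \<ge> Th t \<Longrightarrow> f \<in> F \<Longrightarrow> f n < \<epsilon> t" for t n f using Th0 by blast
  define P where "P t = (\<Sum>s\<le>t. Th s)" for t
  define idx where "idx t i = P t + N * t + i" for t i
  have Pmono: "t \<le> t' \<Longrightarrow> P t \<le> P t'" for t t' unfolding P_def by (rule sum_mono2) auto
  have ThP: "Th t \<le> P t" for t unfolding P_def by (rule member_le_sum) auto
  have small: "f \<in> F \<Longrightarrow> f (idx t i) < \<epsilon> t" for f t i
  proof -
    assume f: "f \<in> F"
    have "Th t \<le> idx t i" unfolding idx_def using ThP[of t] by simp
    then show ?thesis using Th f by blast
  qed
  have idx_lt: "idx t i < idx t' i'" if "t < t'" "i < N" for t t' i i'
  proof -
    have "P t \<le> P t'" using Pmono that by simp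
    moreover have "N * Suc t \<le> N * t'" using that(1) by (intro mult_le_mono2) simp
    then have "N * t + N \<le> N * t'" by simp
    ultimately show ?thesis unfolding idx_def using that(2) by linarith
  qed
  have idx_inj: "t = t' \<and> i = i'" if "i < N" "i' < N" "idx t i = idx t' i'" for t t' i i'
  proof -
    have "t = t'"
    proof (rule ccontr)
      assume "t \<noteq> t'"
      then consider "t < t'" | "t' < t" by linarith
      then show False
        using idx_lt[of t t' i i'] idx_lt[of t' t i' i] that by cases auto
    qed
    then show ?thesis using that unfolding idx_def by simp
  qed
  define g where "g w t = (\<Sum>i<N. e (w i) (idx t i))" for w t
  have gS: "g w t \<in> S" if "w \<in> words k N" for w t
    unfolding g_def by (rule ds_sum[OF ds]) (use N0 FS eF words_lt[OF that] in auto)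
  have gpos: "0 < g w t" if "w \<in> words k N" for w t using ds_pos[OF ds gS[OF that]] .
  have gbound: "g w t \<le> \<delta>/4 * (1/2)^t" if "w \<in> words k N" for w t
  proof -
    have "g w t \<le> (\<Sum>i<N. \<epsilon> t)"
      unfolding g_def by (rule sum_mono) (use small eF words_lt[OF that] in \<open>auto intro: less_imp_le\<close>)
    also have "\<dots> = \<delta>/4 * (1/2)^t" unfolding \<epsilon>_def using N0 by simp
    finally show ?thesis .
  qed
  have gtau: "g w \<in> tau0 S" if "w \<in> words k N" for w
  proof -
    have lim: "(\<lambda>n. \<delta>/4 * (1/2::real)^n) \<longlonglongrightarrow> 0"
      using tendsto_mult_right_zero[OF LIMSEQ_power_zero[of "1/2::real"]] by simp
    have "g w \<longlonglongrightarrow> 0"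
      by (rule tendsto_sandwich[OF _ _ tendsto_const lim])
         (use gpos[OF that] gbound[OF that] in \<open>auto intro: always_eventually less_imp_le\<close>)
    then show ?thesis using gS[OF that] unfolding tau0_def by blast
  qed
  have G: "finite (g ` words k N)" "g ` words k N \<noteq> {}" "g ` words k N \<subseteq> tau0 S"
    using finite_words words_ne[OF k, of N] gtau by auto
  have "\<exists>a\<in>S \<inter> {0<..<\<delta>/2}. \<exists>H. finite H \<and> H \<noteq> {} \<and> (\<forall>h\<in>g ` words k N. a + sum h H \<in> C \<union> D)"
    by (rule J[unfolded J_set_near_zero_def, rule_format]) (use G d in auto)
  then obtain a H where a0: "a \<in> S \<inter> {0<..<\<delta>/2}" and H: "finite H" "H \<noteq> {}"
    and aH: "\<And>w. w \<in> words k N \<Longrightarrow> a + sum (g w) H \<in> C \<union> D"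
    by blast
  from a0 have a: "a \<in> S" "0 < a" "a < \<delta>/2" by auto
  define col where "col w = (if a + sum (g w) H \<in> C then 0 else 1::nat)" for w
  have "hjmono k col N" by (rule N) (simp add: col_def)
  then obtain w0 V where w0: "w0 \<in> words k N" and V: "V \<noteq> {}" "V \<subseteq> {..<N}"
    and mo: "\<forall>x<k. col (line w0 V x) = col (line w0 V 0)"
    unfolding hjmono_def by blast
  define R where "R = {..<N} - V"
  define a' where "a' = a + (\<Sum>(t,i)\<in>H \<times> R. e (w0 i) (idx t i))"
  define H' where "H' = (\<lambda>(t,i). idx t i) ` (H \<times> V)"
  have injH: "inj_on (\<lambda>(t,i). idx t i) (H \<times> V)"
    unfolding inj_on_def
  proof (clarsimp)
    fix t i t' i' assume *: "t \<in> H" "i \<in> V" "t' \<in> H" "i' \<in> V" "idx t i = idx t' i'"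
    then have "i < N" "i' < N" using V(2) by auto
    then show "t = t' \<and> i = i'" using idx_inj * by blast
  qed
  have key: "a + sum (g (line w0 V x)) H = a' + sum (e x) H'" if x: "x < k" for x
  proof -
    have gl: "g (line w0 V x) t = (\<Sum>i\<in>R. e (w0 i) (idx t i)) + (\<Sum>i\<in>V. e x (idx t i))" for t
    proof -
      have "g (line w0 V x) t = (\<Sum>i\<in>R. e (line w0 V x i) (idx t i)) + (\<Sum>i\<in>V. e (line w0 V x i) (idx t i))"
        unfolding g_def R_def using sum.subset_diff[OF V(2), of "\<lambda>i. e (line w0 V x i) (idx t i)"] by simp
      also have "(\<Sum>i\<in>R. e (line w0 V x i) (idx t i)) = (\<Sum>i\<in>R. e (w0 i) (idx t i))"
        by (rule sum.cong) (auto simp: R_def line_def)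
      also have "(\<Sum>i\<in>V. e (line w0 V x i) (idx t i)) = (\<Sum>i\<in>V. e x (idx t i))"
        by (rule sum.cong) (auto simp: line_def)
      finally show ?thesis .
    qed
    have "sum (g (line w0 V x)) H = (\<Sum>t\<in>H. \<Sum>i\<in>R. e (w0 i) (idx t i)) + (\<Sum>t\<in>H. \<Sum>i\<in>V. e x (idx t i))"
      unfolding gl by (simp add: sum.distrib)
    also have "(\<Sum>t\<in>H. \<Sum>i\<in>R. e (w0 i) (idx t i)) = (\<Sum>(t,i)\<in>H \<times> R. e (w0 i) (idx t i))"
      by (rule sum.cartesian_product)
    also have "(\<Sum>t\<in>H. \<Sum>i\<in>V. e x (idx t i)) = (\<Sum>(t,i)\<in>H \<times> V. e x (idx t i))"
      by (rule sum.cartesian_product)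
    also have "\<dots> = sum (e x) H'"
      unfolding H'_def by (subst sum.reindex[OF injH]) (simp add: case_prod_unfold comp_def)
    finally show ?thesis unfolding a'_def by simp
  qed
  have finR: "finite R" unfolding R_def by simp
  have a'S: "a' \<in> S"
    unfolding a'_def
    by (rule ds_add_sum[OF ds _ a(1)]) (use H finR FS eF words_lt[OF w0] in \<open>auto simp: R_def\<close>)
  have "(\<Sum>(t,i)\<in>H \<times> R. e (w0 i) (idx t i)) = (\<Sum>t\<in>H. \<Sum>i\<in>R. e (w0 i) (idx t i))"
    by (rule sum.cartesian_product[symmetric])
  also have "\<dots> \<le> (\<Sum>t\<in>H. g w0 t)"
  proof (rule sum_mono)
    fix t assume "t \<in> H"
    show "(\<Sum>i\<in>R. e (w0 i) (idx t i)) \<le> g w0 t"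
      unfolding g_def R_def
      by (rule sum_mono2) (use ds_pos[OF ds] FS eF words_lt[OF w0] in \<open>auto intro: less_imp_le\<close>)
  qed
  also have "\<dots> \<le> (\<Sum>t\<in>H. \<delta>/4 * (1/2)^t)" by (rule sum_mono) (rule gbound[OF w0])
  also have "\<dots> = \<delta>/4 * (\<Sum>t\<in>H. (1/2)^t)" by (simp add: sum_distrib_left)
  also have "\<dots> \<le> \<delta>/4 * 2" using geo_sum_le[OF H(1)] d by (intro mult_left_mono) auto
  finally have "a' < \<delta>" unfolding a'_def using a by simp
  moreover have "0 < a'" using ds_pos[OF ds a'S] .
  ultimately have a'I: "a' \<in> S \<inter> {0<..<\<delta>}" using a'S by simp
  have H': "finite H'" "H' \<noteq> {}" unfolding H'_def using H V(1) V(2) finite_subset[OF V(2)] by auto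
  have lw: "x < k \<Longrightarrow> line w0 V x \<in> words k N" for x using line_words[OF w0 V(2)] .
  have CD: "x < k \<Longrightarrow> a' + sum (e x) H' \<in> C \<union> D" for x using aH[OF lw] key by metis
  show ?thesis
  proof (cases "col (line w0 V 0) = 0")
    case True
    have "\<forall>f\<in>F. a' + sum f H' \<in> C"
    proof
      fix f assume "f \<in> F"
      then obtain x where x: "x < k" "f = e x" using Fe by blast
      have "col (line w0 V x) = 0" using mo[rule_format, OF x(1)] True by simp
      then have "a + sum (g (line w0 V x)) H \<in> C" unfolding col_def by (simp split: if_splits)
      then show "a' + sum f H' \<in> C" using key[OF x(1)] x(2) by simp
    qed
    then show ?thesis using a'I H' by blast
  next
    case False
    have "\<forall>f\<in>F. a' + sum f H' \<in> D"
    proof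
      fix f assume "f \<in> F"
      then obtain x where x: "x < k" "f = e x" using Fe by blast
      have "col (line w0 V x) \<noteq> 0" using mo[rule_format, OF x(1)] False by simp
      then have "a + sum (g (line w0 V x)) H \<notin> C" unfolding col_def by (simp split: if_splits)
      then show "a' + sum f H' \<in> D" using key[OF x(1)] x(2) CD[OF x(1)] by simp
    qed
    then show ?thesis using a'I H' by blast
  qed
qed




lemma J_union:
  assumes ds: "dense_subsemigroup S" and J: "J_set_near_zero S (C \<union> D)"
  shows "J_set_near_zero S C \<or> J_set_near_zero S D"
proof (rule ccontr)
  assume "\<not> ?thesis"
  then have nC: "\<not> J_set_near_zero S C" and nD: "\<not> J_set_near_zero S D" by auto
  from nC obtain F1 \<delta>1 where F1: "finite F1" "F1 \<noteq> {}" "F1 \<subseteq> tau0 S" and d1: "0 < \<delta>1"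
    and n1: "\<not> (\<exists>a\<in>S \<inter> {0<..<\<delta>1}. \<exists>H. finite H \<and> H \<noteq> {} \<and> (\<forall>f\<in>F1. a + sum f H \<in> C))"
    unfolding J_set_near_zero_def by blast
  from nD obtain F2 \<delta>2 where F2: "finite F2" "F2 \<noteq> {}" "F2 \<subseteq> tau0 S" and d2: "0 < \<delta>2"
    and n2: "\<not> (\<exists>a\<in>S \<inter> {0<..<\<delta>2}. \<exists>H. finite H \<and> H \<noteq> {} \<and> (\<forall>f\<in>F2. a + sum f H \<in> D))"
    unfolding J_set_near_zero_def by blast
  have "\<exists>a\<in>S \<inter> {0<..<min \<delta>1 \<delta>2}. \<exists>H. finite H \<and> H \<noteq> {} \<and>
     ((\<forall>f\<in>F1 \<union> F2. a + sum f H \<in> C) \<or> (\<forall>f\<in>F1 \<union> F2. a + sum f H \<in> D))"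
    by (rule pattern[OF ds J]) (use F1 F2 d1 d2 in auto)
  then obtain a H where a: "a \<in> S \<inter> {0<..<min \<delta>1 \<delta>2}" and H: "finite H" "H \<noteq> {}"
    and cd: "(\<forall>f\<in>F1 \<union> F2. a + sum f H \<in> C) \<or> (\<forall>f\<in>F1 \<union> F2. a + sum f H \<in> D)"
    by blast
  have a1: "a \<in> S \<inter> {0<..<\<delta>1}" and a2: "a \<in> S \<inter> {0<..<\<delta>2}" using a by auto
  from cd show False
  proof
    assume "\<forall>f\<in>F1 \<union> F2. a + sum f H \<in> C"
    then show False using n1 a1 H by blast
  next
    assume "\<forall>f\<in>F1 \<union> F2. a + sum f H \<in> D"
    then show False using n2 a2 H by blast
  qed
qed

section \<open>Ultrafilters\<close>

lemma uf_filter: "p \<in> beta S \<Longrightarrow> filter_on S p"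
  unfolding beta_def ultrafilter_on_def by simp
lemma uf_sub: "p \<in> beta S \<Longrightarrow> A \<in> p \<Longrightarrow> A \<subseteq> S"
  using uf_filter[of p S] unfolding filter_on_def by auto
lemma uf_S: "p \<in> beta S \<Longrightarrow> S \<in> p"
  using uf_filter[of p S] unfolding filter_on_def by simp
lemma uf_empty: "p \<in> beta S \<Longrightarrow> {} \<notin> p"
  using uf_filter[of p S] unfolding filter_on_def by simp
lemma uf_int: "p \<in> beta S \<Longrightarrow> A \<in> p \<Longrightarrow> B \<in> p \<Longrightarrow> A \<inter> B \<in> p"
  using uf_filter[of p S] unfolding filter_on_def by simp
lemma uf_up: "p \<in> beta S \<Longrightarrow> A \<in> p \<Longrightarrow> A \<subseteq> B \<Longrightarrow> B \<subseteq> S \<Longrightarrow> B \<in> p"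
  using uf_filter[of p S] unfolding filter_on_def by blast
lemma uf_ultra: "p \<in> beta S \<Longrightarrow> A \<subseteq> S \<Longrightarrow> A \<in> p \<or> S - A \<in> p"
  unfolding beta_def ultrafilter_on_def by simp
lemma uf_compl: assumes "p \<in> beta S" "A \<subseteq> S" shows "S - A \<in> p \<longleftrightarrow> A \<notin> p"
proof
  assume "S - A \<in> p"
  show "A \<notin> p"
  proof
    assume "A \<in> p"
    then have "A \<inter> (S - A) \<in> p" using uf_int[OF assms(1)] \<open>S - A \<in> p\<close> by blast
    then show False using uf_empty[OF assms(1)] by simp
  qed
next
  assume "A \<notin> p"
  then show "S - A \<in> p" using uf_ultra[OF assms] by blast
qed

lemma filter_Inter:
  assumes "filter_on S K" "finite E" "E \<subseteq> K" shows "S \<inter> \<Inter>E \<in> K"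
  using assms(2,3)
proof (induction E rule: finite_induct)
  case empty then show ?case using assms(1) unfolding filter_on_def by simp
next
  case (insert X E)
  have int: "\<forall>A\<in>K. \<forall>B\<in>K. A \<inter> B \<in> K" using assms(1) unfolding filter_on_def by simp
  have "X \<in> K" "S \<inter> \<Inter>E \<in> K" using insert by auto
  then have "X \<inter> (S \<inter> \<Inter>E) \<in> K" using int by blast
  moreover have "X \<inter> (S \<inter> \<Inter>E) = S \<inter> \<Inter>(insert X E)" by auto
  ultimately show ?case by simp
qed

definition fip :: "'a set \<Rightarrow> 'a set set \<Rightarrow> bool" where
  "fip S G \<longleftrightarrow> (\<forall>E. finite E \<and> E \<subseteq> G \<longrightarrow> S \<inter> \<Inter>E \<noteq> {})"

lemma ultrafilter_exists:
  assumes FS: "F \<subseteq> Pow S" and fipF: "fip S F"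
  shows "\<exists>p\<in>beta S. F \<subseteq> p"
proof -
  define \<A> where "\<A> = {G. F \<subseteq> G \<and> G \<subseteq> Pow S \<and> fip S G}"
  have Amem: "G \<in> \<A> \<longleftrightarrow> F \<subseteq> G \<and> G \<subseteq> Pow S \<and> fip S G" for G unfolding \<A>_def by simp
  have "\<forall>C\<in>chains \<A>. \<exists>U\<in>\<A>. \<forall>X\<in>C. X \<subseteq> U"
  proof
    fix C assume C: "C \<in> chains \<A>"
    then have Csub: "C \<subseteq> \<A>" and ch: "subset.chain \<A> C" unfolding chains_alt_def chains_def
      by (auto simp: subset.chain_def)
    show "\<exists>U\<in>\<A>. \<forall>X\<in>C. X \<subseteq> U"
    proof (cases "C = {}")
      case True
      then show ?thesis using FS fipF Amem[of F] by auto
    next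
      case False
      have "\<Union>C \<in> \<A>"
        unfolding Amem
      proof (intro conjI)
        obtain c where c: "c \<in> C" using False by blast
        then have "F \<subseteq> c" using Csub Amem[of c] by blast
        then show "F \<subseteq> \<Union>C" using c by blast
        have "\<forall>c\<in>C. c \<subseteq> Pow S" using Csub Amem by blast
        then show "\<Union>C \<subseteq> Pow S" by blast
        show "fip S (\<Union>C)"
          unfolding fip_def
        proof (intro allI impI)
          fix E assume E: "finite E \<and> E \<subseteq> \<Union>C"
          then obtain B where "B \<in> C" "E \<subseteq> B"
            using finite_subset_Union_chain[of E C \<A>] False ch by blast
          then have "fip S B" using Csub Amem[of B] by blast
          then show "S \<inter> \<Inter>E \<noteq> {}" using \<open>E \<subseteq> B\<close> E unfolding fip_def by blast
        qed
      qed
      then show ?thesis by blast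
    qed
  qed
  from Zorn_Lemma2[OF this] obtain M where M: "M \<in> \<A>" and max: "\<And>X. X \<in> \<A> \<Longrightarrow> M \<subseteq> X \<Longrightarrow> X = M"
    by blast
  have MF: "F \<subseteq> M" and MS: "M \<subseteq> Pow S" and fipM: "fip S M" using M Amem[of M] by auto
  have addM: "X \<in> M" if XS: "X \<subseteq> S" and ne: "\<And>E. finite E \<Longrightarrow> E \<subseteq> M \<Longrightarrow> S \<inter> X \<inter> \<Inter>E \<noteq> {}" for X
  proof -
    have "fip S (insert X M)"
      unfolding fip_def
    proof (intro allI impI)
      fix E assume E: "finite E \<and> E \<subseteq> insert X M"
      have "S \<inter> X \<inter> \<Inter>(E - {X}) \<noteq> {}" using ne[of "E - {X}"] E by blast
      moreover have "S \<inter> X \<inter> \<Inter>(E - {X}) \<subseteq> S \<inter> \<Inter>E" by blast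
      ultimately show "S \<inter> \<Inter>E \<noteq> {}" by blast
    qed
    then have "insert X M \<in> \<A>" using MF MS XS Amem[of "insert X M"] by auto
    from max[OF this] show ?thesis by blast
  qed
  have fipM': "S \<inter> \<Inter>E \<noteq> {}" if "finite E" "E \<subseteq> M" for E using fipM that unfolding fip_def by blast
  have uf: "ultrafilter_on S M"
    unfolding ultrafilter_on_def filter_on_def
  proof (intro conjI ballI allI impI)
    show "M \<subseteq> Pow S" by fact
    show "S \<in> M" by (rule addM) (use fipM' in auto)
    show "{} \<notin> M" using fipM'[of "{{}}"] by auto
  next
    fix A B assume A: "A \<in> M" and B: "B \<in> M"
    show "A \<inter> B \<in> M"
    proof (rule addM)
      show "A \<inter> B \<subseteq> S" using A MS by blast
      fix E assume "finite E" "E \<subseteq> M"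
      then have "S \<inter> \<Inter>(insert A (insert B E)) \<noteq> {}" using fipM'[of "insert A (insert B E)"] A B by simp
      then show "S \<inter> (A \<inter> B) \<inter> \<Inter>E \<noteq> {}" by auto
    qed
  next
    fix A B assume A: "A \<in> M" and AB: "A \<subseteq> B \<and> B \<subseteq> S"
    show "B \<in> M"
    proof (rule addM)
      show "B \<subseteq> S" using AB by blast
      fix E assume "finite E" "E \<subseteq> M"
      then have "S \<inter> \<Inter>(insert A E) \<noteq> {}" using fipM'[of "insert A E"] A by simp
      then show "S \<inter> B \<inter> \<Inter>E \<noteq> {}" using AB by auto
    qed
  next
    fix A assume AS: "A \<subseteq> S"
    show "A \<in> M \<or> S - A \<in> M"
    proof (rule ccontr)
      assume "\<not> (A \<in> M \<or> S - A \<in> M)"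
      then have nA: "A \<notin> M" and nB: "S - A \<notin> M" by auto
      obtain E1 where E1: "finite E1" "E1 \<subseteq> M" "S \<inter> A \<inter> \<Inter>E1 = {}"
        using addM[OF AS] nA by blast
      obtain E2 where E2: "finite E2" "E2 \<subseteq> M" "S \<inter> (S - A) \<inter> \<Inter>E2 = {}"
        using addM[of "S - A"] nB by blast
      have "S \<inter> \<Inter>(E1 \<union> E2) \<noteq> {}" using fipM' E1 E2 by simp
      then obtain y where y: "y \<in> S" "y \<in> \<Inter>E1" "y \<in> \<Inter>E2" by blast
      show False
      proof (cases "y \<in> A")
        case True then show False using E1(3) y by blast
      next
        case False then show False using E2(3) y by blast
      qed
    qed
  qed
  then show ?thesis using MF unfolding beta_def by blast
qed

section \<open>Topology\<close>

lemma topspace_beta: "topspace (beta_topology S) = beta S"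
  unfolding beta_topology_def topology_generated_by_topspace
proof
  show "\<Union> {{p \<in> beta S. A \<in> p} |A. A \<subseteq> S} \<subseteq> beta S" by blast
  show "beta S \<subseteq> \<Union> {{p \<in> beta S. A \<in> p} |A. A \<subseteq> S}"
  proof
    fix p assume p: "p \<in> beta S"
    then have "p \<in> {q \<in> beta S. S \<in> q}" using uf_S by blast
    then show "p \<in> \<Union> {{p \<in> beta S. A \<in> p} |A. A \<subseteq> S}" by blast
  qed
qed

lemma open_basic:
  assumes "openin (beta_topology S) U" "p \<in> U" "p \<in> beta S"
  shows "\<exists>A. A \<subseteq> S \<and> A \<in> p \<and> {q \<in> beta S. A \<in> q} \<subseteq> U"
proof -
  have "generate_topology_on {{p \<in> beta S. A \<in> p} |A. A \<subseteq> S} U"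
    using assms(1) unfolding beta_topology_def by (rule openin_topology_generated_by)
  then show ?thesis using assms(2,3)
  proof (induction arbitrary: p)
    case Empty then show ?case by simp
  next
    case (Int a b)
    obtain A1 where A1: "A1 \<subseteq> S" "A1 \<in> p" "{q \<in> beta S. A1 \<in> q} \<subseteq> a" using Int by blast
    obtain A2 where A2: "A2 \<subseteq> S" "A2 \<in> p" "{q \<in> beta S. A2 \<in> q} \<subseteq> b" using Int by blast
    have "A1 \<inter> A2 \<in> p" using uf_int[OF Int.prems(2) A1(2) A2(2)] .
    moreover have "{q \<in> beta S. A1 \<inter> A2 \<in> q} \<subseteq> a \<inter> b"
    proof
      fix q assume q: "q \<in> {q \<in> beta S. A1 \<inter> A2 \<in> q}"
      then have "A1 \<in> q" "A2 \<in> q" using uf_up[of q S "A1 \<inter> A2"] A1(1) A2(1) by auto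
      then show "q \<in> a \<inter> b" using q A1(3) A2(3) by blast
    qed
    ultimately show ?case using A1(1) by blast
  next
    case (UN K)
    then obtain k where "k \<in> K" "p \<in> k" by blast
    then show ?case using UN.IH[of k p] UN.prems by blast
  next
    case (Basis s)
    then show ?case by blast
  qed
qed

lemma basic_open: "A \<subseteq> S \<Longrightarrow> openin (beta_topology S) {q \<in> beta S. A \<in> q}"
  unfolding beta_topology_def by (rule topology_generated_by_Basis) blast

lemma compact_closure:
  assumes KS: "K \<subseteq> Pow S"
  shows "compactin (beta_topology S) (filter_closure S K)"
  unfolding compactin_def
proof (intro conjI allI impI)
  show "filter_closure S K \<subseteq> topspace (beta_topology S)"
    unfolding topspace_beta filter_closure_def by blast
next
  fix \<U> assume \<U>: "(\<forall>U\<in>\<U>. openin (beta_topology S) U) \<and> filter_closure S K \<subseteq> \<Union> \<U>"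
  show "\<exists>\<F>. finite \<F> \<and> \<F> \<subseteq> \<U> \<and> filter_closure S K \<subseteq> \<Union> \<F>"
  proof (rule ccontr)
    assume nofin: "\<not> (\<exists>\<F>. finite \<F> \<and> \<F> \<subseteq> \<U> \<and> filter_closure S K \<subseteq> \<Union> \<F>)"
    have "\<forall>p\<in>filter_closure S K. \<exists>UA. fst UA \<in> \<U> \<and> p \<in> fst UA \<and> snd UA \<subseteq> S \<and> snd UA \<in> p \<and>
            {q \<in> beta S. snd UA \<in> q} \<subseteq> fst UA"
    proof
      fix p assume p: "p \<in> filter_closure S K"
      then obtain U where U: "U \<in> \<U>" "p \<in> U" using \<U> by blast
      have "p \<in> beta S" using p unfolding filter_closure_def by blast
      then obtain A where "A \<subseteq> S \<and> A \<in> p \<and> {q \<in> beta S. A \<in> q} \<subseteq> U"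
        using open_basic[of S U p] U \<U> by blast
      then show "\<exists>UA. fst UA \<in> \<U> \<and> p \<in> fst UA \<and> snd UA \<subseteq> S \<and> snd UA \<in> p \<and>
            {q \<in> beta S. snd UA \<in> q} \<subseteq> fst UA"
        using U by (intro exI[of _ "(U, A)"]) auto
    qed
    from bchoice[OF this] obtain UA where UA0: "\<forall>p\<in>filter_closure S K. fst (UA p) \<in> \<U> \<and> p \<in> fst (UA p) \<and>
       snd (UA p) \<subseteq> S \<and> snd (UA p) \<in> p \<and> {q \<in> beta S. snd (UA p) \<in> q} \<subseteq> fst (UA p)"
      by blast
    have UA: "fst (UA p) \<in> \<U> \<and> p \<in> fst (UA p) \<and>
       snd (UA p) \<subseteq> S \<and> snd (UA p) \<in> p \<and> {q \<in> beta S. snd (UA p) \<in> q} \<subseteq> fst (UA p)"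
      if "p \<in> filter_closure S K" for p using UA0 that by blast
    define UU where "UU p = fst (UA p)" for p
    define AA where "AA p = snd (UA p)" for p
    have UU: "UU p \<in> \<U>" "p \<in> UU p" "AA p \<subseteq> S" "AA p \<in> p" "{q \<in> beta S. AA p \<in> q} \<subseteq> UU p"
      if "p \<in> filter_closure S K" for p using UA[OF that] unfolding UU_def AA_def by auto
    define Fam where "Fam = K \<union> (\<lambda>p. S - AA p) ` filter_closure S K"
    have FamS: "Fam \<subseteq> Pow S" unfolding Fam_def using KS by blast
    have "fip S Fam"
      unfolding fip_def
    proof (intro allI impI)
      fix E assume E: "finite E \<and> E \<subseteq> Fam"
      have "E - K \<subseteq> (\<lambda>p. S - AA p) ` filter_closure S K" using E unfolding Fam_def by blast
      moreover have "finite (E - K)" using E by blast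
      ultimately obtain P0 where P0: "P0 \<subseteq> filter_closure S K" "finite P0" "E - K = (\<lambda>p. S - AA p) ` P0"
        using finite_subset_image by metis
      have "finite (UU ` P0)" "UU ` P0 \<subseteq> \<U>" using P0 UU by auto
      then obtain q where q: "q \<in> filter_closure S K" "q \<notin> \<Union>(UU ` P0)" using nofin by blast
      have qb: "q \<in> beta S" and Kq: "K \<subseteq> q" using q(1) unfolding filter_closure_def by auto
      have inq: "S - AA p \<in> q" if "p \<in> P0" for p
      proof -
        have pc: "p \<in> filter_closure S K" using that P0(1) by blast
        have "AA p \<notin> q"
        proof
          assume "AA p \<in> q"
          then have "q \<in> UU p" using UU(5)[OF pc] qb by blast
          then show False using q(2) that by blast
        qed
        then show ?thesis using uf_compl[OF qb UU(3)[OF pc]] by blast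
      qed
      have "E - K \<subseteq> q" unfolding P0(3) using inq by blast
      then have "E \<subseteq> q" using Kq by blast
      then have "S \<inter> \<Inter>E \<in> q" using filter_Inter[OF uf_filter[OF qb]] E by blast
      then show "S \<inter> \<Inter>E \<noteq> {}" using uf_empty[OF qb] by auto
    qed
    from ultrafilter_exists[OF FamS this] obtain q where q: "q \<in> beta S" "Fam \<subseteq> q" by blast
    then have qc: "q \<in> filter_closure S K" unfolding filter_closure_def Fam_def by blast
    then have "S - AA q \<in> q" using q(2) unfolding Fam_def by blast
    moreover have "AA q \<in> q" using UU(4)[OF qc] .
    ultimately show False using uf_compl[OF q(1) UU(3)[OF qc]] by blast
  qed
qed




definition shiftS :: "real set \<Rightarrow> real \<Rightarrow> real set \<Rightarrow> real set" where
  "shiftS S x A = {y \<in> S. x + y \<in> A}"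

lemma beta_plus_J0:
  assumes ds: "dense_subsemigroup S" and p: "p \<in> J0 S" and q: "q \<in> J0 S"
  shows "beta_plus S p q \<in> J0 S"
proof -
  have pb: "p \<in> beta S" and po: "\<And>\<epsilon>. 0 < \<epsilon> \<Longrightarrow> S \<inter> {0<..<\<epsilon>} \<in> p"
    using p unfolding J0_def Oplus_def by auto
  have qb: "q \<in> beta S" and qo: "\<And>\<epsilon>. 0 < \<epsilon> \<Longrightarrow> S \<inter> {0<..<\<epsilon>} \<in> q"
    and qJ: "\<And>A. A \<in> q \<Longrightarrow> J_set_near_zero S A"
    using q unfolding J0_def Oplus_def by auto
  define T where "T A = {x \<in> S. shiftS S x A \<in> q}" for A
  have bp: "beta_plus S p q = {A. A \<subseteq> S \<and> T A \<in> p}"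
    unfolding beta_plus_def T_def shiftS_def by simp
  have TS: "T A \<subseteq> S" for A unfolding T_def by blast
  have shS: "shiftS S x A \<subseteq> S" for x A unfolding shiftS_def by blast
  have T_S: "T S = S"
  proof -
    have "shiftS S x S = S" if "x \<in> S" for x unfolding shiftS_def using ds_add[OF ds that] by blast
    then show ?thesis unfolding T_def using uf_S[OF qb] by auto
  qed
  have T_empty: "T {} = {}" unfolding T_def shiftS_def using uf_empty[OF qb] by simp
  have T_int: "T (A \<inter> B) = T A \<inter> T B" for A B
  proof -
    have e: "shiftS S x (A \<inter> B) = shiftS S x A \<inter> shiftS S x B" for x unfolding shiftS_def by blast
    have "shiftS S x A \<inter> shiftS S x B \<in> q \<longleftrightarrow> shiftS S x A \<in> q \<and> shiftS S x B \<in> q" for x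
      using uf_int[OF qb] uf_up[OF qb _ _ shS] by blast
    then show ?thesis unfolding T_def e by blast
  qed
  have T_mono: "A \<subseteq> B \<Longrightarrow> T A \<subseteq> T B" for A B
  proof -
    assume AB: "A \<subseteq> B"
    have "shiftS S x A \<subseteq> shiftS S x B" for x unfolding shiftS_def using AB by blast
    then show ?thesis unfolding T_def using uf_up[OF qb _ _ shS] by blast
  qed
  have T_compl: "T (S - A) = S - T A" for A
  proof -
    have e: "x \<in> S \<Longrightarrow> shiftS S x (S - A) = S - shiftS S x A" for x
      unfolding shiftS_def using ds_add[OF ds] by blast
    have "x \<in> S \<Longrightarrow> (shiftS S x (S - A) \<in> q \<longleftrightarrow> shiftS S x A \<notin> q)" for x
      unfolding e using uf_compl[OF qb shS] by blast
    then show ?thesis unfolding T_def by blast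
  qed
  have uf: "ultrafilter_on S (beta_plus S p q)"
    unfolding ultrafilter_on_def filter_on_def bp
  proof (intro conjI ballI allI impI)
    show "{A. A \<subseteq> S \<and> T A \<in> p} \<subseteq> Pow S" by blast
    show "S \<in> {A. A \<subseteq> S \<and> T A \<in> p}" using T_S uf_S[OF pb] by simp
    show "{} \<notin> {A. A \<subseteq> S \<and> T A \<in> p}" using T_empty uf_empty[OF pb] by simp
  next
    fix A B assume "A \<in> {A. A \<subseteq> S \<and> T A \<in> p}" "B \<in> {A. A \<subseteq> S \<and> T A \<in> p}"
    then show "A \<inter> B \<in> {A. A \<subseteq> S \<and> T A \<in> p}" using T_int uf_int[OF pb] by auto
  next
    fix A B assume A: "A \<in> {A. A \<subseteq> S \<and> T A \<in> p}" and AB: "A \<subseteq> B \<and> B \<subseteq> S"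
    then have "T B \<in> p" using uf_up[OF pb _ T_mono TS] by blast
    then show "B \<in> {A. A \<subseteq> S \<and> T A \<in> p}" using AB by blast
  next
    fix A :: "real set" assume AS: "A \<subseteq> S"
    have "T A \<in> p \<or> S - T A \<in> p" using uf_ultra[OF pb TS] .
    then show "A \<in> {A. A \<subseteq> S \<and> T A \<in> p} \<or> S - A \<in> {A. A \<subseteq> S \<and> T A \<in> p}"
      using AS T_compl[of A] by auto
  qed
  then have rb: "beta_plus S p q \<in> beta S" unfolding beta_def by simp
  have ro: "S \<inter> {0<..<\<epsilon>} \<in> beta_plus S p q" if e: "0 < \<epsilon>" for \<epsilon>
  proof -
    have "S \<inter> {0<..<\<epsilon>/2} \<subseteq> T (S \<inter> {0<..<\<epsilon>})"
    proof
      fix x assume x: "x \<in> S \<inter> {0<..<\<epsilon>/2}"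
      have "S \<inter> {0<..<\<epsilon>/2} \<subseteq> shiftS S x (S \<inter> {0<..<\<epsilon>})"
        unfolding shiftS_def using x ds_add[OF ds] by auto
      then have "shiftS S x (S \<inter> {0<..<\<epsilon>}) \<in> q"
        using uf_up[OF qb qo[of "\<epsilon>/2"] _ shS] e by simp
      then show "x \<in> T (S \<inter> {0<..<\<epsilon>})" unfolding T_def using x by blast
    qed
    then have "T (S \<inter> {0<..<\<epsilon>}) \<in> p" using uf_up[OF pb po[of "\<epsilon>/2"] _ TS] e by simp
    then show ?thesis unfolding bp by simp
  qed
  have rJ: "J_set_near_zero S A" if A: "A \<in> beta_plus S p q" for A
    unfolding J_set_near_zero_def
  proof (intro allI impI)
    fix F :: "(nat \<Rightarrow> real) set" and \<delta> :: real
    assume F: "finite F \<and> F \<noteq> {} \<and> F \<subseteq> tau0 S" and d: "0 < \<delta>"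
    have TA: "T A \<in> p" using A unfolding bp by simp
    have "T A \<inter> (S \<inter> {0<..<\<delta>/2}) \<in> p" using uf_int[OF pb TA po[of "\<delta>/2"]] d by simp
    then have "T A \<inter> (S \<inter> {0<..<\<delta>/2}) \<noteq> {}" using uf_empty[OF pb] by auto
    then obtain x where x: "x \<in> S" "0 < x" "x < \<delta>/2" "shiftS S x A \<in> q" unfolding T_def by auto
    have "J_set_near_zero S (shiftS S x A)" using qJ x(4) .
    then have "\<exists>a\<in>S \<inter> {0<..<\<delta>/2}. \<exists>H. finite H \<and> H \<noteq> {} \<and> (\<forall>f\<in>F. a + sum f H \<in> shiftS S x A)"
      unfolding J_set_near_zero_def using F d by simp
    then obtain a H where a: "a \<in> S \<inter> {0<..<\<delta>/2}" and H: "finite H" "H \<noteq> {}"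
      and aH: "\<forall>f\<in>F. a + sum f H \<in> shiftS S x A" by blast
    have xa: "x + a \<in> S \<inter> {0<..<\<delta>}" using a x ds_add[OF ds x(1)] by auto
    have "\<forall>f\<in>F. (x + a) + sum f H \<in> A" using aH unfolding shiftS_def by (simp add: add.assoc)
    then show "\<exists>a\<in>S \<inter> {0<..<\<delta>}. \<exists>H. finite H \<and> H \<noteq> {} \<and> (\<forall>f\<in>F. a + sum f H \<in> A)"
      using xa H by blast
  qed
  show ?thesis unfolding J0_def Oplus_def using rb ro rJ by blast
qed

theorem lemma4p6:
  fixes S :: "real set"
  assumes "dense_subsemigroup S"
  defines "K \<equiv> {A. A \<subseteq> S \<and> \<not> J_set_near_zero S (S - A)}"
  shows "filter_on S K
    \<and> J0 S = filter_closure S K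
    \<and> J0 S \<noteq> {}
    \<and> (\<forall>p\<in>J0 S. \<forall>q\<in>J0 S. beta_plus S p q \<in> J0 S)
    \<and> compactin (beta_topology S) (J0 S)"
proof -
  note ds = assms(1)
  have Kmem: "A \<in> K \<longleftrightarrow> A \<subseteq> S \<and> \<not> J_set_near_zero S (S - A)" for A unfolding K_def by simp
  have KP: "K \<subseteq> Pow S" using Kmem by blast
  have KS: "S \<in> K" using Kmem not_J_empty[OF ds] by simp
  have Ke: "{} \<notin> K" using Kmem J_S[OF ds] by simp
  have Kint: "A \<inter> B \<in> K" if "A \<in> K" "B \<in> K" for A B
  proof -
    have "S - (A \<inter> B) = (S - A) \<union> (S - B)" by blast
    then show ?thesis using that Kmem J_union[OF ds, of "S - A" "S - B"] by auto
  qed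
  have Kup: "B \<in> K" if "A \<in> K" "A \<subseteq> B" "B \<subseteq> S" for A B
  proof -
    have "S - B \<subseteq> S - A" using that by blast
    then show ?thesis using that Kmem J_mono[of S "S - B" "S - A"] by blast
  qed
  have filt: "filter_on S K" unfolding filter_on_def using KP KS Ke Kint Kup by blast
  have Ktail: "S \<inter> {0<..<\<epsilon>} \<in> K" if "0 < \<epsilon>" for \<epsilon>
    using Kmem not_J_tail[OF ds that] by blast
  have eq: "J0 S = filter_closure S K"
  proof (intro set_eqI iffI)
    fix p assume p: "p \<in> J0 S"
    then have pb: "p \<in> beta S" and pJ: "\<And>A. A \<in> p \<Longrightarrow> J_set_near_zero S A"
      unfolding J0_def Oplus_def by auto
    have "K \<subseteq> p"
    proof
      fix A assume "A \<in> K"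
      then have AS: "A \<subseteq> S" and nJ: "\<not> J_set_near_zero S (S - A)" using Kmem by auto
      show "A \<in> p"
      proof (rule ccontr)
        assume "A \<notin> p"
        then have "S - A \<in> p" using uf_compl[OF pb AS] by blast
        then show False using pJ nJ by blast
      qed
    qed
    then show "p \<in> filter_closure S K" unfolding filter_closure_def using pb by blast
  next
    fix p assume p: "p \<in> filter_closure S K"
    then have pb: "p \<in> beta S" and Kp: "K \<subseteq> p" unfolding filter_closure_def by auto
    have "J_set_near_zero S A" if A: "A \<in> p" for A
    proof (rule ccontr)
      assume nJ: "\<not> J_set_near_zero S A"
      have AS: "A \<subseteq> S" using uf_sub[OF pb A] .
      have "S - (S - A) = A" using AS by blast
      then have "S - A \<in> K" using Kmem nJ by simp
      then have "S - A \<in> p" using Kp by blast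
      then show False using uf_compl[OF pb AS] A by blast
    qed
    moreover have "S \<inter> {0<..<\<epsilon>} \<in> p" if "0 < \<epsilon>" for \<epsilon> using Ktail[OF that] Kp by blast
    ultimately show "p \<in> J0 S" unfolding J0_def Oplus_def using pb by blast
  qed
  have "fip S K"
    unfolding fip_def
  proof (intro allI impI)
    fix E assume "finite E \<and> E \<subseteq> K"
    then have "S \<inter> \<Inter>E \<in> K" using filter_Inter[OF filt] by blast
    then show "S \<inter> \<Inter>E \<noteq> {}" using Ke by auto
  qed
  from ultrafilter_exists[OF KP this] obtain p where "p \<in> beta S" "K \<subseteq> p" by blast
  then have ne: "J0 S \<noteq> {}" unfolding eq filter_closure_def by blast
  have plus: "\<forall>p\<in>J0 S. \<forall>q\<in>J0 S. beta_plus S p q \<in> J0 S" using beta_plus_J0[OF ds] by blast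
  have comp: "compactin (beta_topology S) (J0 S)" unfolding eq by (rule compact_closure[OF KP])
  show ?thesis using filt eq ne plus comp by blast
qed


end
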